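(* If $p<2q$, then $\rho(\mathcal{L}_\omega(\widehat{\mathcal{T}_{p/q}}))=\rho(\mathcal{L}_\omega(\mathcal{T}_{p/q}))$, where $\mathcal{L}_\omega(\mathcal{X})$ denotes the set of infinite words accepted by the automaton $\mathcal{X}$ and $\rho$ is applied elementwise.
   Context: Let $p>q>1$ be coprime integers, $A_p=\{0,\dots,p-1\}$ and $B=\{p-(2q-1),\dots,p-1\}$. For $n\in\mathbb{N}$ and $a\in\mathbb{Z}$, let $\tau(n,a)=\frac{np+a}{q}$, defined only when $q$ divides $np+a$. Let $\mathcal{T}_{p/q}$ (resp. $\widehat{\mathcal{T}_{p/q}}$) be the deterministic automaton with state set $\mathbb{N}$, alphabet $A_p$ (resp. $B$), initial state $0$, and transitions $n\xrightarrow{a}\tau(n,a)$ for $a$ in the alphabet with $\tau(n,a)$ defined. An infinite word is accepted if each of its finite prefixes labels a path starting at $0$. For an infinite word $a_1a_2\cdots$ of integers, $\rho(a_1a_2\cdots)=\sum_{i\ge 1} a_i\left(\frac{p}{q}\right)^{-i}$. *)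

theory Defs
  imports Complex_Main
begin

definition alphA :: "int \<Rightarrow> int set" where
  "alphA p = {0..p-1}"

definition alphB :: "int \<Rightarrow> int \<Rightarrow> int set" where
  "alphB p q = {p-(2*q-1)..p-1}"

definition tau :: "int \<Rightarrow> int \<Rightarrow> nat \<Rightarrow> int \<Rightarrow> nat option" where
  "tau p q n a = (if q dvd (int n * p + a) \<and> (int n * p + a) div q \<ge> 0
                  then Some (nat ((int n * p + a) div q)) else None)"

fun run :: "int set \<Rightarrow> int \<Rightarrow> int \<Rightarrow> nat \<Rightarrow> int list \<Rightarrow> nat option" where
  "run D p q n [] = Some n"
| "run D p q n (a # w) =
     (if a \<in> D then (case tau p q n a of None \<Rightarrow> None | Some m \<Rightarrow> run D p q m w)
      else None)"

text \<open>Infinite words a_1 a_2 ... are functions nat => int (w i = a_(i+1)).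
  A word is accepted if every finite prefix labels a path starting at 0.\<close>
definition omega_lang :: "int set \<Rightarrow> int \<Rightarrow> int \<Rightarrow> (nat \<Rightarrow> int) set" where
  "omega_lang D p q = {w. \<forall>k. run D p q 0 (map w [0..<k]) \<noteq> None}"

definition rho :: "int \<Rightarrow> int \<Rightarrow> (nat \<Rightarrow> int) \<Rightarrow> real" where
  "rho p q w = (\<Sum>i. real_of_int (w i) * (real_of_int p / real_of_int q) powi (- int (Suc i)))"

end

theory Submission
  imports Defs
begin

lemma run_snoc:
  "run D p q n (xs @ [a]) = (case run D p q n xs of None \<Rightarrow> None
      | Some m \<Rightarrow> if a \<in> D then tau p q m a else None)"
  by (induction xs arbitrary: n) (auto split: option.splits)

lemma L1:
  assumes "w \<in> omega_lang D p q" "q > 0"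
  shows "\<exists>s::nat\<Rightarrow>nat. s 0 = 0 \<and> (\<forall>k. w k \<in> D \<and> q * int (s (Suc k)) = p * int (s k) + w k)"
proof -
  define s where "s k = the (run D p q 0 (map w [0..<k]))" for k
  have rs: "run D p q 0 (map w [0..<k]) = Some (s k)" for k
    using assms(1) unfolding omega_lang_def s_def by auto
  have "w k \<in> D \<and> q * int (s (Suc k)) = p * int (s k) + w k" for k
  proof -
    have "run D p q 0 (map w [0..<Suc k]) = Some (s (Suc k))" by (rule rs)
    hence h: "(if w k \<in> D then tau p q (s k) (w k) else None) = Some (s (Suc k))"
      using rs[of k] by (simp add: run_snoc)
    hence wD: "w k \<in> D" by (auto split: if_splits)
    with h have t: "tau p q (s k) (w k) = Some (s (Suc k))" by simp
    hence d: "q dvd (int (s k) * p + w k)" and nn: "(int (s k) * p + w k) div q \<ge> 0"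
      and e: "s (Suc k) = nat ((int (s k) * p + w k) div q)"
      unfolding tau_def by (auto split: if_splits)
    from e nn have "int (s (Suc k)) = (int (s k) * p + w k) div q" by simp
    with d have "q * int (s (Suc k)) = int (s k) * p + w k" by simp
    with wD show ?thesis by (simp add: mult.commute)
  qed
  moreover have "s 0 = 0" using rs[of 0] by simp
  ultimately show ?thesis by blast
qed

lemma L2:
  assumes "q \<noteq> 0" "s 0 = 0" "\<forall>k. w k \<in> D \<and> q * int (s (Suc k)) = p * int (s k) + w k"
  shows "w \<in> omega_lang D p q"
proof -
  have "run D p q 0 (map w [0..<k]) = Some (s k)" for k
  proof (induction k)
    case 0 then show ?case using assms(2) by simp
  next
    case (Suc k)
    have e: "int (s k) * p + w k = q * int (s (Suc k))" using assms(3) by (simp add: mult.commute)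
    have "tau p q (s k) (w k) = Some (s (Suc k))"
      unfolding tau_def e using assms(1) by simp
    then show ?case using Suc assms(3) by (simp add: run_snoc)
  qed
  then show ?thesis unfolding omega_lang_def by simp
qed

lemma powi_conv:
  "(real_of_int p / real_of_int q) powi (- int (Suc i)) = (real_of_int q / real_of_int p) ^ Suc i"
proof -
  have "(real_of_int p / real_of_int q) powi (- int (Suc i)) = inverse ((real_of_int p / real_of_int q) powi (int (Suc i)))"
    by (rule power_int_minus)
  also have "\<dots> = inverse ((real_of_int p / real_of_int q) ^ Suc i)" by (simp only: power_int_of_nat)
  also have "\<dots> = (real_of_int q / real_of_int p) ^ Suc i" by (simp only: power_inverse[symmetric] inverse_divide)
  finally show ?thesis .
qed

lemma psum:
  assumes "s 0 = 0" "\<forall>k. q * int (s (Suc k)) = p * int (s k) + w k" "p \<noteq> 0"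
  shows "(\<Sum>i<k. real_of_int (w i) * (real_of_int q / real_of_int p) ^ Suc i)
          = real_of_int q * real (s k) * (real_of_int q / real_of_int p) ^ k"
proof (induction k)
  case 0 then show ?case using assms(1) by simp
next
  case (Suc k)
  have e: "real_of_int q * real (s (Suc k)) = real_of_int p * real (s k) + real_of_int (w k)"
    using arg_cong[OF assms(2)[rule_format, of k], of real_of_int] by simp
  have "(\<Sum>i<Suc k. real_of_int (w i) * (real_of_int q / real_of_int p) ^ Suc i)
      = real_of_int q * real (s k) * (real_of_int q / real_of_int p) ^ k
        + real_of_int (w k) * (real_of_int q / real_of_int p) ^ Suc k"
    using Suc by simp
  also have "\<dots> = (real_of_int q / real_of_int p) ^ k * (real_of_int q / real_of_int p)
        * (real_of_int p * real (s k) + real_of_int (w k))"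
    using assms(3) by (simp add: field_simps)
  also have "\<dots> = real_of_int q * real (s (Suc k)) * (real_of_int q / real_of_int p) ^ Suc k"
    by (simp only: e[symmetric]) (simp add: field_simps)
  finally show ?case .
qed

lemma rho_lim:
  fixes p q :: int
  assumes pq: "p > q" "q > 1" and s: "s 0 = 0" "\<forall>k. q * int (s (Suc k)) = p * int (s k) + w k"
    and bd: "\<forall>k. \<bar>w k\<bar> \<le> C"
  shows "(\<lambda>k. real_of_int q * real (s k) * (real_of_int q / real_of_int p) ^ k) \<longlonglongrightarrow> rho p q w"
proof -
  define r where "r = real_of_int q / real_of_int p"
  have r0: "0 < r" "r < 1" using pq unfolding r_def by auto
  have sm: "summable (\<lambda>i. real_of_int (w i) * r ^ Suc i)"
  proof (rule summable_comparison_test)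
    show "\<exists>N. \<forall>n\<ge>N. norm (real_of_int (w n) * r ^ Suc n) \<le> real_of_int C * r ^ Suc n"
    proof (intro exI allI impI)
      fix n :: nat
      have "\<bar>real_of_int (w n)\<bar> \<le> real_of_int C" using bd by (metis of_int_abs of_int_le_iff)
      then show "norm (real_of_int (w n) * r ^ Suc n) \<le> real_of_int C * r ^ Suc n"
        using r0 by (simp add: abs_mult mult_right_mono)
    qed
    show "summable (\<lambda>n. real_of_int C * r ^ Suc n)"
      using r0 by (intro summable_mult) (simp add: summable_geometric_iff)
  qed
  have "rho p q w = (\<Sum>i. real_of_int (w i) * r ^ Suc i)"
    unfolding rho_def r_def powi_conv by simp
  with summable_LIMSEQ[OF sm] psum[OF s] pq show ?thesis
    unfolding r_def by simp
qed

lemma main_sub: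
  fixes p q :: int
  assumes pq: "p > q" "q > 1" "p < 2*q"
    and s0: "s 0 = 0" and sB: "\<forall>k. w k \<in> alphB p q \<and> q * int (s (Suc k)) = p * int (s k) + w k"
  shows "\<exists>m::nat\<Rightarrow>nat. m 0 = 0 \<and> (\<forall>k. int (s k) - 2*p \<le> int (m k) \<and> m k \<le> s k)
           \<and> (\<forall>k. (q * int (m (Suc k))) div p = int (m k))"
proof -
  have p0: "p > 0" using pq by simp
  define par :: "nat \<Rightarrow> nat" where "par n = nat ((q * int n) div p)" for n
  have par_int: "int (par n) = (q * int n) div p" for n
    unfolding par_def using pq by (simp add: pos_imp_zdiv_nonneg_iff)
  have par_mono: "mono par"
    unfolding mono_def par_def using pq
    by (auto intro!: nat_mono zdiv_mono1 mult_left_mono)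
  have divb: "p * (X div p) \<le> X" "X - p + 1 \<le> p * (X div p)" for X :: int
  proof -
    have "X = p * (X div p) + X mod p" by simp
    moreover have "0 \<le> X mod p" "X mod p < p" using p0 by simp_all
    ultimately show "p * (X div p) \<le> X" "X - p + 1 \<le> p * (X div p)" by linarith+
  qed
  have wb: "p - 2*q + 1 \<le> w k" "w k \<le> p - 1" for k
    using sB[rule_format, of k] unfolding alphB_def by auto
  have P2: "par (s (Suc k)) \<le> s k" for k
  proof -
    have "q * int (s (Suc k)) < p * (int (s k) + 1)" using sB wb[of k] by (simp add: algebra_simps)
    hence "p * ((q * int (s (Suc k))) div p) < p * (int (s k) + 1)"
      using divb(1)[of "q * int (s (Suc k))"] by linarith
    hence "(q * int (s (Suc k))) div p < int (s k) + 1"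
      using p0 mult_less_cancel_left_pos by blast
    then show ?thesis using par_int[of "s (Suc k)"] by linarith
  qed
  have P3: "int (s k) \<le> int (par (s (Suc k))) + 1" for k
  proof -
    have "p * (int (s k) - 1) \<le> q * int (s (Suc k))" using sB wb[of k] pq by (simp add: algebra_simps)
    hence "p * (int (s k) - 1) < p * ((q * int (s (Suc k))) div p + 1)"
      using divb(2)[of "q * int (s (Suc k))"] by (simp add: algebra_simps)
    hence "int (s k) - 1 < (q * int (s (Suc k))) div p + 1"
      using p0 mult_less_cancel_left_pos by blast
    then show ?thesis using par_int[of "s (Suc k)"] by linarith
  qed
  have P4: "p * (int (par b) - int (par a)) \<le> q * (int b - int a) + p - 1" for a b
    using divb[of "q * int b"] divb[of "q * int a"] par_int[of a] par_int[of b]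
    by (simp add: algebra_simps)
  have ppq: "p * (p - q) \<ge> p * 1" using pq by (intro mult_left_mono) auto
  have bounds: "\<forall>K. d \<le> K \<longrightarrow> int (s (K-d)) - 2*p \<le> int ((par^^d) (s K)) \<and> (par^^d) (s K) \<le> s (K-d)" for d
  proof (induction d)
    case 0 then show ?case using p0 by simp
  next
    case (Suc d)
    show ?case
    proof (intro allI impI)
      fix K assume K: "Suc d \<le> K"
      define a where "a = (par^^d) (s K)"
      define j where "j = K - Suc d"
      have jK: "K - d = Suc j" using K unfolding j_def by simp
      from Suc.IH K have "int (s (K-d)) - 2*p \<le> int a \<and> a \<le> s (K-d)"
        unfolding a_def by auto
      hence ih: "int (s (Suc j)) - 2*p \<le> int a" "a \<le> s (Suc j)" unfolding jK by auto
      have up: "par a \<le> s j" using monoD[OF par_mono ih(2)] P2[of j] by simp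
      have h1: "q * (int (s (Suc j)) - int a) \<le> q * (2*p)" using ih pq by (intro mult_left_mono) auto
      have h2: "p * int (s j) \<le> p * (int (par (s (Suc j))) + 1)"
        using P3[of j] p0 by (intro mult_left_mono) auto
      have h3: "p * (int (par (s (Suc j))) - int (par a)) \<le> q * (int (s (Suc j)) - int a) + p - 1"
        by (rule P4)
      have "p * (int (s j) - int (par a)) \<le> p * (2*p)"
      proof -
        have e: "p * (int (s j) - int (par a)) = p * int (s j) - p * int (par a)"
           "p * (int (par (s (Suc j))) + 1) = p * int (par (s (Suc j))) + p"
           "p * (int (par (s (Suc j))) - int (par a)) = p * int (par (s (Suc j))) - p * int (par a)"
           "q * (2*p) = 2 * (p * q)" "p * (2*p) = 2 * (p * p)" "p * (p - q) = p*p - p*q"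
          by (simp_all add: algebra_simps)
        show ?thesis using h1 h2 h3 ppq unfolding e by linarith
      qed
      hence "int (s j) - int (par a) \<le> 2*p" using p0 by simp
      then show "int (s (K - Suc d)) - 2*p \<le> int ((par^^Suc d) (s K)) \<and> (par^^Suc d) (s K) \<le> s (K - Suc d)"
        using up unfolding j_def[symmetric] a_def by simp
    qed
  qed
  define g where "g j K = (par^^(K-j)) (s K)" for j K
  have gb: "j \<le> K \<Longrightarrow> int (s j) - 2*p \<le> int (g j K) \<and> g j K \<le> s j" for j K
  proof -
    assume jK: "j \<le> K"
    have "K - (K - j) = j" using jK by simp
    then show ?thesis using bounds[of "K-j", rule_format, of K] jK unfolding g_def by simp
  qed
  have gdec1: "j \<le> K \<Longrightarrow> g j (Suc K) \<le> g j K" for j K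
  proof -
    assume "j \<le> K"
    hence "Suc K - j = Suc (K - j)" by simp
    hence "g j (Suc K) = (par^^(K-j)) (par (s (Suc K)))" unfolding g_def by (simp add: funpow_swap1)
    also have "\<dots> \<le> (par^^(K-j)) (s K)" by (rule funpow_mono[OF par_mono P2])
    finally show ?thesis unfolding g_def .
  qed
  have gdec: "j \<le> K0 \<Longrightarrow> K0 \<le> K \<Longrightarrow> g j K \<le> g j K0" for j K0 K
  proof -
    assume a: "j \<le> K0" and b: "K0 \<le> K"
    from b show ?thesis
    proof (induction K rule: dec_induct)
      case base then show ?case by simp
    next
      case (step K) then show ?case using gdec1[of j K] a by simp
    qed
  qed
  define m where "m j = Inf (g j ` {j..})" for j
  have mex: "\<exists>K\<ge>j. g j K = m j" for j
    using Inf_nat_def1[of "g j ` {j..}"] unfolding m_def by auto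
  have mlow: "K \<ge> j \<Longrightarrow> m j \<le> g j K" for j K
    unfolding m_def by (rule wellorder_Inf_le1) auto
  have mev: "\<exists>K0\<ge>j. \<forall>K\<ge>K0. g j K = m j" for j
  proof -
    obtain K0 where K0: "K0 \<ge> j" "g j K0 = m j" using mex by blast
    have "\<forall>K\<ge>K0. g j K = m j"
    proof (intro allI impI)
      fix K assume "K0 \<le> K"
      then have "g j K \<le> g j K0" "m j \<le> g j K" using gdec[of j K0 K] mlow[of j K] K0 by auto
      then show "g j K = m j" using K0 by simp
    qed
    then show ?thesis using K0 by blast
  qed
  have mpar: "(q * int (m (Suc k))) div p = int (m k)" for k
  proof -
    obtain K0 where K0: "K0 \<ge> k" "\<forall>K\<ge>K0. g k K = m k" using mev by blast
    obtain K1 where K1: "K1 \<ge> Suc k" "\<forall>K\<ge>K1. g (Suc k) K = m (Suc k)" using mev by blast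
    define K where "K = max K0 K1"
    have "K - k = Suc (K - Suc k)" using K1 unfolding K_def by auto
    hence "g k K = par (g (Suc k) K)" unfolding g_def by simp
    hence "m k = par (m (Suc k))" using K0 K1 unfolding K_def by simp
    then show ?thesis using par_int by simp
  qed
  have m0: "m 0 = 0"
  proof -
    obtain K where "g 0 K = m 0" using mex by blast
    then show ?thesis using gb[of 0 K] s0 by simp
  qed
  have mb: "int (s k) - 2*p \<le> int (m k) \<and> m k \<le> s k" for k
  proof -
    obtain K where "K \<ge> k" "g k K = m k" using mex by blast
    then show ?thesis using gb[of k K] by simp
  qed
  show ?thesis using m0 mb mpar by blast
qed

theorem mainTheorem12:
  fixes p q :: int
  assumes "p > q" and "q > 1" and "coprime p q" and "p < 2 * q"
  shows "rho p q ` omega_lang (alphB p q) p q = rho p q ` omega_lang (alphA p) p q"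
proof
  have AB: "alphA p \<subseteq> alphB p q" using assms unfolding alphA_def alphB_def by auto
  show "rho p q ` omega_lang (alphA p) p q \<subseteq> rho p q ` omega_lang (alphB p q) p q"
  proof (rule image_mono, rule subsetI)
    fix w assume "w \<in> omega_lang (alphA p) p q"
    then obtain s :: "nat \<Rightarrow> nat" where "s 0 = 0" "\<forall>k. w k \<in> alphA p \<and> q * int (s (Suc k)) = p * int (s k) + w k"
      using L1 assms by force
    moreover have "\<forall>k. w k \<in> alphB p q \<and> q * int (s (Suc k)) = p * int (s k) + w k"
      using calculation AB by blast
    ultimately show "w \<in> omega_lang (alphB p q) p q" using L2[of q s w] assms by simp
  qed
  show "rho p q ` omega_lang (alphB p q) p q \<subseteq> rho p q ` omega_lang (alphA p) p q"
  proof
    fix y assume "y \<in> rho p q ` omega_lang (alphB p q) p q"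
    then obtain w where w: "w \<in> omega_lang (alphB p q) p q" and y: "y = rho p q w" by blast
    then obtain s :: "nat \<Rightarrow> nat" where s0: "s 0 = 0"
      and sB: "\<forall>k. w k \<in> alphB p q \<and> q * int (s (Suc k)) = p * int (s k) + w k"
      using L1 assms by force
    obtain m :: "nat \<Rightarrow> nat" where m0: "m 0 = 0" and mb: "\<forall>k. int (s k) - 2*p \<le> int (m k) \<and> m k \<le> s k"
      and mp: "\<forall>k. (q * int (m (Suc k))) div p = int (m k)"
      using main_sub[OF assms(1,2,4) s0 sB] by blast
    define w' where "w' k = q * int (m (Suc k)) - p * int (m k)" for k
    have p0: "p > 0" using assms by simp
    have w'A: "w' k \<in> alphA p" for k
    proof -
      define X where "X = q * int (m (Suc k))"
      have "X = p * (X div p) + X mod p" by simp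
      moreover have "0 \<le> X mod p" "X mod p < p" using p0 by simp_all
      moreover have "X div p = int (m k)" using mp unfolding X_def by simp
      ultimately show ?thesis unfolding w'_def alphA_def X_def[symmetric] by auto
    qed
    have mrec: "\<forall>k. q * int (m (Suc k)) = p * int (m k) + w' k" unfolding w'_def by simp
    have w'L: "w' \<in> omega_lang (alphA p) p q" using L2[of q m w'] m0 mrec w'A assms by auto
    have bdw: "\<forall>k. \<bar>w k\<bar> \<le> p + 2*q"
    proof
      fix k show "\<bar>w k\<bar> \<le> p + 2*q" using sB[rule_format, of k] assms unfolding alphB_def by auto
    qed
    have bdw': "\<forall>k. \<bar>w' k\<bar> \<le> p + 2*q"
    proof
      fix k show "\<bar>w' k\<bar> \<le> p + 2*q" using w'A[of k] assms unfolding alphA_def by auto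
    qed
    define r where "r = real_of_int q / real_of_int p"
    have r0: "0 < r" "r < 1" using assms unfolding r_def by auto
    have l1: "(\<lambda>k. real_of_int q * real (s k) * r ^ k) \<longlonglongrightarrow> rho p q w"
    proof -
      have "\<forall>k. q * int (s (Suc k)) = p * int (s k) + w k" using sB by blast
      from rho_lim[OF assms(1,2) s0 this bdw] show ?thesis unfolding r_def .
    qed
    have l2: "(\<lambda>k. real_of_int q * real (m k) * r ^ k) \<longlonglongrightarrow> rho p q w'"
      using rho_lim[OF assms(1,2) m0 mrec bdw'] unfolding r_def by auto
    have ld: "(\<lambda>k. real_of_int q * real (s k) * r ^ k - real_of_int q * real (m k) * r ^ k) \<longlonglongrightarrow> 0"
    proof (rule tendsto_sandwich[of "\<lambda>_. 0" _ _ "\<lambda>k. real_of_int q * (2 * real_of_int p) * r ^ k"])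
      have "real (s k) - real (m k) \<le> 2 * real_of_int p" "real (m k) \<le> real (s k)" for k
        using mb[rule_format, of k] by linarith+
      then have "real_of_int q * real (s k) * r ^ k - real_of_int q * real (m k) * r ^ k
            = (real_of_int q * r ^ k) * (real (s k) - real (m k))"
        and "0 \<le> real_of_int q * r ^ k" for k
        using r0 assms by (auto simp: algebra_simps)
      show "\<forall>\<^sub>F k in sequentially. 0 \<le> real_of_int q * real (s k) * r ^ k - real_of_int q * real (m k) * r ^ k"
        using mb r0 assms by (auto simp: algebra_simps intro!: mult_left_mono mult_right_mono)
      show "\<forall>\<^sub>F k in sequentially. real_of_int q * real (s k) * r ^ k - real_of_int q * real (m k) * r ^ k
              \<le> real_of_int q * (2 * real_of_int p) * r ^ k"
      proof (rule always_eventually, rule allI)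
        fix k
        have "real (s k) - real (m k) \<le> 2 * real_of_int p" using mb[rule_format, of k] by linarith
        hence "(real_of_int q * r ^ k) * (real (s k) - real (m k)) \<le> (real_of_int q * r ^ k) * (2 * real_of_int p)"
          using r0 assms by (intro mult_left_mono) auto
        then show "real_of_int q * real (s k) * r ^ k - real_of_int q * real (m k) * r ^ k
              \<le> real_of_int q * (2 * real_of_int p) * r ^ k" by (simp add: algebra_simps)
      qed
      show "(\<lambda>_. 0) \<longlonglongrightarrow> (0::real)" by simp
      show "(\<lambda>k. real_of_int q * (2 * real_of_int p) * r ^ k) \<longlonglongrightarrow> 0"
        using r0 by (intro tendsto_mult_right_zero LIMSEQ_power_zero) auto
    qed
    have "(\<lambda>k. real_of_int q * real (s k) * r ^ k - real_of_int q * real (m k) * r ^ k) \<longlonglongrightarrow> rho p q w - rho p q w'"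
      by (intro tendsto_diff l1 l2)
    with ld have "rho p q w - rho p q w' = 0" using LIMSEQ_unique by blast
    then have "y = rho p q w'" using y by simp
    with w'L show "y \<in> rho p q ` omega_lang (alphA p) p q" by blast
  qed
qed

end
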